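(* In any mixed signaling scheme, there is no non-splittable signal $S$ with $|\{w_1(j): j\in S\}|\ge 3$.
   Context: Setting: $n\ge 2$ bidders, $m$ item types with probabilities $p_j$, nonnegative valuations $v_{i,j}$; $\psi_{i,j}=p_jv_{i,j}$. A mixed signaling scheme is a finite signal set $\mathcal{S}$ and $\varphi:[m]\times\mathcal{S}\to[0,1]$ with $\sum_S\varphi(j,S)=1$ for each $j$; $\varphi_{j,S}=\varphi(j,S)$; a signal is identified with its support, so $j\in S$ means $\varphi_{j,S}>0$. Ties are broken by a fixed priority order on bidders; $w_1(j)$ is the bidder maximizing $\psi_{i,j}$. For a signal $S$ and a subset $T\subseteq S$ define $\mathrm{rev}_S(T)=\mathrm{max2}_i\sum_{j\in T}\varphi_{j,S}\psi_{i,j}$ (second-largest value over bidders, with multiplicity), and $\mathrm{rev}(S)=\mathrm{rev}_S(S)$. $S$ is splittable if there is a partition $S=S_1\cup\dots\cup S_t$ into $t\ge 2$ nonempty parts with $\sum_{k=1}^t\mathrm{rev}_S(S_k)\ge\mathrm{rev}(S)$; otherwise $S$ is non-splittable. *)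

theory Defs
  imports Complex_Main
begin

text \<open>Bidders are 0..<n, item types are 0..<m. psi i j stands for p_j * v_{i,j}.
  The fixed priority order on bidders is given by an injective rank function prio
  (smaller rank = higher priority).\<close>

definition max2 :: "nat \<Rightarrow> (nat \<Rightarrow> real) \<Rightarrow> real" where
  "max2 n f = sort (map f [0..<n]) ! (n - 2)"

definition w1 :: "nat \<Rightarrow> (nat \<Rightarrow> nat) \<Rightarrow> (nat \<Rightarrow> nat \<Rightarrow> real) \<Rightarrow> nat \<Rightarrow> nat" where
  "w1 n prio psi j = (THE i. i < n \<and> (\<forall>k<n. psi k j \<le> psi i j)
       \<and> (\<forall>k<n. psi k j = psi i j \<longrightarrow> prio i \<le> prio k))"

definition supp_sig :: "nat \<Rightarrow> (nat \<Rightarrow> 's \<Rightarrow> real) \<Rightarrow> 's \<Rightarrow> nat set" where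
  "supp_sig m phi s = {j. j < m \<and> phi j s > 0}"

definition revS :: "nat \<Rightarrow> (nat \<Rightarrow> nat \<Rightarrow> real) \<Rightarrow> (nat \<Rightarrow> 's \<Rightarrow> real) \<Rightarrow> 's \<Rightarrow> nat set \<Rightarrow> real" where
  "revS n psi phi s T = max2 n (\<lambda>i. \<Sum>j\<in>T. phi j s * psi i j)"

definition splittable :: "nat \<Rightarrow> nat \<Rightarrow> (nat \<Rightarrow> nat \<Rightarrow> real) \<Rightarrow> (nat \<Rightarrow> 's \<Rightarrow> real) \<Rightarrow> 's \<Rightarrow> bool" where
  "splittable n m psi phi s \<longleftrightarrow>
     (\<exists>P. \<Union>P = supp_sig m phi s \<and> (\<forall>A\<in>P. A \<noteq> {}) \<and> pairwise disjnt P \<and> card P \<ge> 2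
        \<and> (\<Sum>A\<in>P. revS n psi phi s A) \<ge> revS n psi phi s (supp_sig m phi s))"

end

theory Submission imports Defs begin

lemma len_filter_sort: "length (filter P (sort xs)) = length (filter P (xs::real list))"
  by (simp add: filter_sort)

lemma count_max2: "length (filter P (sort (map (f::nat\<Rightarrow>real) [0..<n]))) = card {i. i < n \<and> P (f i)}"
proof -
  have "length (filter P (sort (map f [0..<n]))) = length (filter (\<lambda>i. P (f i)) [0..<n])"
    by (simp only: len_filter_sort) (simp add: filter_map comp_def)
  also have "\<dots> = card {i. i < n \<and> P (f i)}"
    by (simp add: length_filter_conv_card cong: conj_cong)
  finally show ?thesis .
qed

lemma max2_ge:
  assumes "n \<ge> 2" "a < n" "b < n" "a \<noteq> b"
  shows "min (f a) (f b) \<le> max2 n f"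
proof (rule ccontr)
  assume H: "\<not> ?thesis"
  define xs where "xs = sort (map f [0..<n])"
  have len: "length xs = n" by (simp add: xs_def)
  have srt: "sorted xs" by (simp add: xs_def)
  have u: "max2 n f = xs ! (n-2)" by (simp add: max2_def xs_def)
  have "{a,b} \<subseteq> {i. i < n \<and> f i > max2 n f}" using H assms by auto
  hence "card {a,b} \<le> card {i. i < n \<and> f i > max2 n f}" by (intro card_mono) auto
  hence c2: "2 \<le> length (filter (\<lambda>v. v > max2 n f) xs)" using assms(4)
    by (simp add: xs_def count_max2)
  have split: "xs = take (n-1) xs @ [xs ! (n-1)]"
  proof -
    have "drop (n-1) xs = xs ! (n-1) # drop (Suc (n-1)) xs" using len assms
      by (intro Cons_nth_drop_Suc[symmetric]) simp
    also have "drop (Suc (n-1)) xs = []" using len assms by simp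
    finally show ?thesis by (metis append_take_drop_id)
  qed
  have "\<forall>v\<in>set (take (n-1) xs). v \<le> max2 n f"
  proof
    fix v assume "v \<in> set (take (n-1) xs)"
    then obtain k where k: "k < n-1" "v = xs ! k" using len
      by (auto simp: in_set_conv_nth)
    show "v \<le> max2 n f" unfolding u k(2) using srt k(1) len assms(1)
      by (intro sorted_nth_mono) auto
  qed
  hence "filter (\<lambda>v. v > max2 n f) (take (n-1) xs) = []" by (auto simp: filter_empty_conv)
  hence "length (filter (\<lambda>v. v > max2 n f) xs) \<le> 1" by (subst split) simp
  with c2 show False by simp
qed

lemma max2_le:
  assumes "n \<ge> 2"
  shows "\<exists>x y. x < n \<and> y < n \<and> x \<noteq> y \<and> max2 n f \<le> f x \<and> max2 n f \<le> f y"
proof -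
  define xs where "xs = sort (map f [0..<n])"
  have len: "length xs = n" by (simp add: xs_def)
  have srt: "sorted xs" by (simp add: xs_def)
  have u: "max2 n f = xs ! (n-2)" by (simp add: max2_def xs_def)
  have split: "xs = take (n-2) xs @ [xs ! (n-2), xs ! (n-1)]"
  proof -
    have "drop (n-1) xs = xs ! (n-1) # drop (Suc (n-1)) xs" using len assms
      by (intro Cons_nth_drop_Suc[symmetric]) simp
    also have "drop (Suc (n-1)) xs = []" using len assms by simp
    finally have a: "drop (n-1) xs = [xs ! (n-1)]" .
    have "drop (n-2) xs = xs ! (n-2) # drop (Suc (n-2)) xs" using len assms
      by (intro Cons_nth_drop_Suc[symmetric]) simp
    also have "Suc (n-2) = n-1" using assms by simp
    finally have "drop (n-2) xs = [xs ! (n-2), xs ! (n-1)]" using a by simp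
    then show ?thesis by (metis append_take_drop_id)
  qed
  have "xs ! (n-2) \<le> xs ! (n-1)" using srt len assms by (intro sorted_nth_mono) auto
  hence "2 \<le> length (filter (\<lambda>v. v \<ge> max2 n f) xs)" unfolding u
    by (subst split) simp
  hence "2 \<le> card {i. i < n \<and> f i \<ge> max2 n f}" by (simp add: xs_def count_max2)
  then obtain A where "A \<subseteq> {i. i < n \<and> f i \<ge> max2 n f}" "card A = 2"
    by (meson obtain_subset_with_card_n)
  then obtain x y where "A = {x,y}" "x \<noteq> y" by (meson card_2_iff)
  then show ?thesis using \<open>A \<subseteq> _\<close> by blast
qed

lemma w1_prop:
  assumes "n \<ge> 1" "inj_on prio {..<n}"
  shows "w1 n prio psi j < n \<and> (\<forall>k<n. psi k j \<le> psi (w1 n prio psi j) j)"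
proof -
  define Q where "Q = (\<lambda>i. i < n \<and> (\<forall>k<n. psi k j \<le> psi i j))"
  have fin: "finite ((\<lambda>i. psi i j) ` {..<n})" by simp
  have ne: "(\<lambda>i. psi i j) ` {..<n} \<noteq> {}" using assms by (auto simp: lessThan_empty_iff)
  obtain i0 where i0: "i0 < n" "psi i0 j = Max ((\<lambda>i. psi i j) ` {..<n})"
    using Max_in[OF fin ne] by auto
  have "Q i0" unfolding Q_def using i0 fin by auto
  then obtain i where i: "Q i" "\<forall>k. Q k \<longrightarrow> prio i \<le> prio k"
    using ex_has_least_nat[of Q i0 prio] by blast
  have P: "i < n \<and> (\<forall>k<n. psi k j \<le> psi i j) \<and> (\<forall>k<n. psi k j = psi i j \<longrightarrow> prio i \<le> prio k)"
    using i unfolding Q_def by (metis order.refl)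
  have U: "i' = i" if "i' < n \<and> (\<forall>k<n. psi k j \<le> psi i' j) \<and> (\<forall>k<n. psi k j = psi i' j \<longrightarrow> prio i' \<le> prio k)" for i'
  proof -
    have "psi i j = psi i' j" using P that by (meson order_antisym)
    hence "prio i = prio i'" using P that by (metis order_antisym)
    then show ?thesis using inj_on_eq_iff[OF assms(2), of i i'] P that by simp
  qed
  have "w1 n prio psi j = i" unfolding w1_def
    using the_equality[of "\<lambda>i. i < n \<and> (\<forall>k<n. psi k j \<le> psi i j) \<and> (\<forall>k<n. psi k j = psi i j \<longrightarrow> prio i \<le> prio k)", OF P U] .
  then show ?thesis using P by simp
qed

theorem claim3:
  fixes n m :: nat and p :: "nat \<Rightarrow> real" and v :: "nat \<Rightarrow> nat \<Rightarrow> real"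
    and prio :: "nat \<Rightarrow> nat" and Sig :: "'s set" and phi :: "nat \<Rightarrow> 's \<Rightarrow> real"
    and s :: 's
  assumes "n \<ge> 2"
    and "\<forall>j<m. p j \<ge> 0" and "(\<Sum>j<m. p j) = 1"
    and "\<forall>i<n. \<forall>j<m. v i j \<ge> 0"
    and "inj_on prio {..<n}"
    and "finite Sig"
    and "\<forall>j<m. \<forall>t\<in>Sig. 0 \<le> phi j t \<and> phi j t \<le> 1"
    and "\<forall>j<m. (\<Sum>t\<in>Sig. phi j t) = 1"
    and "s \<in> Sig"
    and "card (w1 n prio (\<lambda>i j. p j * v i j) ` supp_sig m phi s) \<ge> 3"
  shows "splittable n m (\<lambda>i j. p j * v i j) phi s"
proof -
  define psi where "psi = (\<lambda>i j. p j * v i j)"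
  define S where "S = supp_sig m phi s"
  define W where "W = w1 n prio psi"
  define F where "F = (\<lambda>T i. \<Sum>j\<in>T. phi j s * psi i j)"
  have finS: "finite S" unfolding S_def supp_sig_def by simp
  have phipos: "\<And>j. j \<in> S \<Longrightarrow> phi j s > 0" unfolding S_def supp_sig_def by simp
  have Wp: "\<And>j. W j < n \<and> (\<forall>k<n. psi k j \<le> psi (W j) j)"
    unfolding W_def using w1_prop[of n prio psi] assms(1,5) by simp
  have rev_def': "\<And>T. revS n psi phi s T = max2 n (F T)" unfolding revS_def F_def by simp
  obtain x y where xy: "x < n" "y < n" "x \<noteq> y" "max2 n (F S) \<le> F S x" "max2 n (F S) \<le> F S y"
    using max2_le[OF assms(1), of "F S"] by blast
  have c3: "card (W ` S) \<ge> 3" using assms(10) unfolding W_def psi_def S_def by simp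
  have "\<not> W ` S \<subseteq> {x, y}"
  proof
    assume "W ` S \<subseteq> {x, y}"
    hence "card (W ` S) \<le> card {x,y}" by (intro card_mono) auto
    also have "\<dots> \<le> 2" by (simp add: card_insert_le_m1)
    finally show False using c3 by simp
  qed
  then obtain j0 where j0: "j0 \<in> S" "W j0 \<noteq> x" "W j0 \<noteq> y" by blast
  define c where "c = W j0"
  have "\<not> W ` S \<subseteq> {c}"
  proof
    assume "W ` S \<subseteq> {c}"
    hence "card (W ` S) \<le> card {c}" by (intro card_mono) auto
    thus False using c3 by simp
  qed
  then obtain j1 where j1: "j1 \<in> S" "W j1 \<noteq> c" by blast
  define G where "G = {j\<in>S. W j = c}"
  define H where "H = S - G"
  have jG: "j0 \<in> G" unfolding G_def c_def using j0 by simp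
  have jH: "j1 \<in> H" unfolding H_def G_def using j1 by simp
  have GH: "G \<noteq> H" using jG unfolding H_def by auto
  have finG: "finite G" and finH: "finite H" using finS unfolding G_def H_def by auto
  have Fsplit: "\<And>i. F S i = F G i + F H i"
  proof -
    fix i
    have "S = G \<union> H" "G \<inter> H = {}" unfolding G_def H_def by auto
    then show "F S i = F G i + F H i" unfolding F_def using finG finH
      by (simp add: sum.union_disjoint)
  qed
  have cn: "c < n" using Wp unfolding c_def by simp
  have Gmax: "F G k \<le> F G c" if "k < n" for k
    unfolding F_def
  proof (rule sum_mono)
    fix j assume "j \<in> G"
    hence "W j = c" "phi j s > 0" using phipos unfolding G_def by auto
    hence "psi k j \<le> psi c j" using Wp that by metis
    thus "phi j s * psi k j \<le> phi j s * psi c j" using \<open>phi j s > 0\<close> by simp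
  qed
  have rG1: "F G y \<le> max2 n (F G)"
    using max2_ge[OF assms(1) cn xy(2), of "F G"] Gmax[OF xy(2)] j0(3) c_def by auto
  have rG2: "F G x \<le> max2 n (F G)"
    using max2_ge[OF assms(1) cn xy(1), of "F G"] Gmax[OF xy(1)] j0(2) c_def by auto
  have rH: "min (F H x) (F H y) \<le> max2 n (F H)"
    using max2_ge[OF assms(1) xy(1) xy(2) xy(3)] .
  have main: "max2 n (F S) \<le> max2 n (F G) + max2 n (F H)"
  proof (cases "F H y \<le> F H x")
    case True
    hence "min (F H x) (F H y) = F H y" by simp
    then show ?thesis using rG1 rH xy(5) Fsplit[of y] by linarith
  next
    case False
    hence "min (F H x) (F H y) = F H x" by simp
    then show ?thesis using rG2 rH xy(4) Fsplit[of x] by linarith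
  qed
  show ?thesis
    unfolding splittable_def
  proof (intro exI[of _ "{G, H}"] conjI)
    show "\<Union>{G, H} = supp_sig m phi s" unfolding H_def G_def S_def by auto
    show "\<forall>A\<in>{G, H}. A \<noteq> {}" using jG jH by auto
    show "pairwise disjnt {G, H}" unfolding pairwise_def disjnt_def H_def by auto
    show "2 \<le> card {G, H}" using GH by simp
    have "(\<Sum>A\<in>{G, H}. revS n (\<lambda>i j. p j * v i j) phi s A) = max2 n (F G) + max2 n (F H)"
      using GH rev_def' unfolding psi_def by simp
    moreover have "revS n (\<lambda>i j. p j * v i j) phi s (supp_sig m phi s) = max2 n (F S)"
      using rev_def' unfolding psi_def S_def by simp
    ultimately show "revS n (\<lambda>i j. p j * v i j) phi s (supp_sig m phi s)
        \<le> (\<Sum>A\<in>{G, H}. revS n (\<lambda>i j. p j * v i j) phi s A)" using main by simp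
  qed
qed

end
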